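(* Let $\mathbb{F}_q$ be a finite field of order $q$ and $m\ge2$. Then the optimal winning probabilities of the multiplication games over $\mathbb{F}_q$ satisfy $$\omega_m\le\frac{1+\sqrt{1+4q(q-1)\,\omega_{m-1}}}{2q}.$$
   Context: For $r\ge1$, the $r$-player "Number on the Forehead" multiplication game over $\mathbb{F}_q$: inputs $X_1,\dots,X_r$ are independent and uniform on $\mathbb{F}_q$; player $k$ sees all inputs except $X_k$ (denoted $X_{[r]\setminus\{k\}}$) and outputs $Y_k=f_k(X_{[r]\setminus\{k\}})$ for a function $f_k:\mathbb{F}_q^{r-1}\to\mathbb{F}_q$ (for $r=1$ this is a constant). The game is won iff $\prod_{k=1}^rX_k=\sum_{k=1}^rY_k$. Define $\omega_r(f_1,\dots,f_r)=\Pr[\prod_{k=1}^rX_k=\sum_{k=1}^rf_k(X_{[r]\setminus\{k\}})]$ and $\omega_r=\max_{f_1,\dots,f_r}\omega_r(f_1,\dots,f_r)$, the maximum over all functions $\mathbb{F}_q^{r-1}\to\mathbb{F}_q$. *)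

theory Defs
  imports Complex_Main "HOL-Library.FuncSet"
begin

text \<open>Multiplication NOF game over a finite field 'a with r players indexed 0..r-1.
  An input is x in PiE {..<r} UNIV; player k gets the restriction of x to
  {..<r} - {k} (all inputs except x k) and outputs f k of it.\<close>

definition nof_win_prob :: "nat \<Rightarrow> (nat \<Rightarrow> (nat \<Rightarrow> 'a::{finite,field}) \<Rightarrow> 'a) \<Rightarrow> real" where
  "nof_win_prob r f =
     real (card {x \<in> PiE {..<r} (\<lambda>_. (UNIV::'a set)).
                  (\<Prod>k<r. x k) = (\<Sum>k<r. f k (restrict x ({..<r} - {k})))})
     / real (card (UNIV::'a set)) ^ r"

definition nof_omega :: "'a::{finite,field} itself \<Rightarrow> nat \<Rightarrow> real" where
  "nof_omega (t::'a itself) r =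
     Max (range (\<lambda>f :: nat \<Rightarrow> (nat \<Rightarrow> 'a) \<Rightarrow> 'a. nof_win_prob r f))"

end

theory Submission imports Defs "HOL-Analysis.Convex" begin

lemma win_prob_range_finite:
  "finite (range (\<lambda>f :: nat \<Rightarrow> (nat \<Rightarrow> 'a::{finite,field}) \<Rightarrow> 'a. nof_win_prob r f))"
proof -
  let ?S = "PiE {..<r} (\<lambda>_. (UNIV::'a set))"
  have "range (\<lambda>f :: nat \<Rightarrow> (nat \<Rightarrow> 'a) \<Rightarrow> 'a. nof_win_prob r f)
        \<subseteq> (\<lambda>c. real c / real (card (UNIV::'a set)) ^ r) ` {..card ?S}"
  proof
    fix v assume "v \<in> range (\<lambda>f :: nat \<Rightarrow> (nat \<Rightarrow> 'a) \<Rightarrow> 'a. nof_win_prob r f)"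
    then obtain f :: "nat \<Rightarrow> (nat \<Rightarrow> 'a) \<Rightarrow> 'a" where v: "v = nof_win_prob r f" by auto
    let ?A = "{x \<in> ?S. (\<Prod>k<r. x k) = (\<Sum>k<r. f k (restrict x ({..<r} - {k})))}"
    have "card ?A \<le> card ?S" by (rule card_mono) (auto simp: finite_PiE)
    then show "v \<in> (\<lambda>c. real c / real (card (UNIV::'a set)) ^ r) ` {..card ?S}"
      unfolding v nof_win_prob_def by auto
  qed
  then show ?thesis by (rule finite_subset) auto
qed

lemma win_prob_le_omega:
  "nof_win_prob r (f :: nat \<Rightarrow> (nat \<Rightarrow> 'a::{finite,field}) \<Rightarrow> 'a) \<le> nof_omega TYPE('a) r"
  unfolding nof_omega_def by (rule Max_ge[OF win_prob_range_finite]) auto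

lemma omega_attained:
  "\<exists>f :: nat \<Rightarrow> (nat \<Rightarrow> 'a::{finite,field}) \<Rightarrow> 'a. nof_omega TYPE('a) r = nof_win_prob r f"
proof -
  have "nof_omega TYPE('a) r \<in> range (\<lambda>f :: nat \<Rightarrow> (nat \<Rightarrow> 'a) \<Rightarrow> 'a. nof_win_prob r f)"
    unfolding nof_omega_def by (rule Max_in[OF win_prob_range_finite]) auto
  then show ?thesis by auto
qed

lemma sum_PiE_Suc:
  fixes h :: "(nat \<Rightarrow> 'a::finite) \<Rightarrow> real"
  shows "(\<Sum>x\<in>PiE {..<Suc n} (\<lambda>_. (UNIV::'a set)). h x)
       = (\<Sum>a\<in>UNIV. \<Sum>y\<in>PiE {..<n} (\<lambda>_. UNIV). h (y(n := a)))"
proof -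
  have eq: "PiE {..<Suc n} (\<lambda>_. (UNIV::'a set))
        = (\<lambda>(a, g). g(n := a)) ` (UNIV \<times> PiE {..<n} (\<lambda>_. UNIV))"
    using PiE_insert_eq[of n "{..<n}" "\<lambda>_. (UNIV::'a set)"] by (simp add: lessThan_Suc)
  have inj: "inj_on (\<lambda>(a, g). g(n := a)) (UNIV \<times> PiE {..<n} (\<lambda>_. (UNIV::'a set)))"
    using inj_combinator[of n "{..<n}" "\<lambda>_. (UNIV::'a set)"] by simp
  show ?thesis
    unfolding eq sum.reindex[OF inj]
    by (simp add: sum.cartesian_product case_prod_unfold)
qed

lemma card_filter_sum:
  assumes "finite S"
  shows "real (card {x\<in>S. P x}) = (\<Sum>x\<in>S. if P x then 1 else 0)"
  using assms by (simp add: sum.If_cases Int_def)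

lemma win_prob_card:
  "real (card {x \<in> PiE {..<r} (\<lambda>_. (UNIV::'a set)).
           (\<Prod>k<r. x k) = (\<Sum>k<r. f k (restrict x ({..<r} - {k})))})
   = nof_win_prob r (f :: nat \<Rightarrow> (nat \<Rightarrow> 'a::{finite,field}) \<Rightarrow> 'a) * real (card (UNIV::'a set)) ^ r"
  unfolding nof_win_prob_def by simp

lemma pair_bound:
  fixes f :: "nat \<Rightarrow> (nat \<Rightarrow> 'a::{finite,field}) \<Rightarrow> 'a" and a b :: 'a and n :: nat
  assumes ab: "a \<noteq> b"
  defines "win \<equiv> \<lambda>y a. (\<Prod>k<Suc n. (y(n := a)) k)
              = (\<Sum>k<Suc n. f k (restrict (y(n := a)) ({..<Suc n} - {k})))"
  shows "real (card {y \<in> PiE {..<n} (\<lambda>_. (UNIV::'a set)). win y a \<and> win y b})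
         \<le> real (card (UNIV::'a set)) ^ n * nof_omega TYPE('a) n"
proof -
  define F where "F \<equiv> \<lambda>c k z. f k (restrict ((z::nat \<Rightarrow> 'a)(n := c)) ({..<Suc n} - {k}))"
  define g where "g \<equiv> \<lambda>k z. (F a k z - F b k z) / (a - b)"
  let ?Y = "PiE {..<n} (\<lambda>_. (UNIV::'a set))"
  have key: "(\<Prod>k<n. y k) = (\<Sum>k<n. g k (restrict y ({..<n} - {k})))"
    if y: "y \<in> ?Y" and wa: "win y a" and wb: "win y b" for y
  proof -
    have prod: "(\<Prod>k<Suc n. (y(n := c)) k) = (\<Prod>k<n. y k) * c" for c
      by (simp add: prod.lessThan_Suc)
    have r1: "restrict (y(n := c)) ({..<Suc n} - {n}) = restrict y {..<n}" for c
      by (rule ext) (auto simp: restrict_def)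
    have r2: "restrict (y(n := c)) ({..<Suc n} - {k})
             = restrict ((restrict y ({..<n} - {k}))(n := c)) ({..<Suc n} - {k})" if "k < n" for c k
      using that by (intro ext) (auto simp: restrict_def)
    have sum: "(\<Sum>k<Suc n. f k (restrict (y(n := c)) ({..<Suc n} - {k})))
             = (\<Sum>k<n. F c k (restrict y ({..<n} - {k}))) + f n (restrict y {..<n})" for c
      by (simp add: sum.lessThan_Suc r1 r2 F_def)
    have "(\<Prod>k<n. y k) * a - (\<Prod>k<n. y k) * b
          = (\<Sum>k<n. F a k (restrict y ({..<n} - {k}))) - (\<Sum>k<n. F b k (restrict y ({..<n} - {k})))"
      using wa wb unfolding win_def prod sum by simp
    then have "(\<Prod>k<n. y k) * (a - b)
          = (\<Sum>k<n. F a k (restrict y ({..<n} - {k})) - F b k (restrict y ({..<n} - {k})))"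
      by (simp add: sum_subtractf right_diff_distrib)
    also have "\<dots> = (\<Sum>k<n. g k (restrict y ({..<n} - {k}))) * (a - b)"
      using ab by (simp add: g_def sum_distrib_right)
    finally show ?thesis using ab by simp
  qed
  have "card {y \<in> ?Y. win y a \<and> win y b}
        \<le> card {y \<in> ?Y. (\<Prod>k<n. y k) = (\<Sum>k<n. g k (restrict y ({..<n} - {k})))}"
    by (rule card_mono) (auto simp: finite_PiE key)
  then have "real (card {y \<in> ?Y. win y a \<and> win y b})
        \<le> nof_win_prob n g * real (card (UNIV::'a set)) ^ n"
    by (simp add: win_prob_card[symmetric])
  also have "\<dots> \<le> nof_omega TYPE('a) n * real (card (UNIV::'a set)) ^ n"
    by (rule mult_right_mono[OF win_prob_le_omega]) simp
  finally show ?thesis by (simp add: mult.commute)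
qed

lemma main_bound:
  fixes f :: "nat \<Rightarrow> (nat \<Rightarrow> 'a::{finite,field}) \<Rightarrow> 'a" and n :: nat
  shows "nof_win_prob (Suc n) f
         \<le> (1 + sqrt (1 + 4 * real (card (UNIV::'a set)) * (real (card (UNIV::'a set)) - 1)
                          * nof_omega TYPE('a) n))
            / (2 * real (card (UNIV::'a set)))"
proof -
  define q where "q = real (card (UNIV::'a set))"
  define \<omega> where "\<omega> = nof_omega TYPE('a) n"
  define p where "p = nof_win_prob (Suc n) f"
  let ?Y = "PiE {..<n} (\<lambda>_. (UNIV::'a set))"
  define win where "win \<equiv> \<lambda>y a. (\<Prod>k<Suc n. (y(n := a)) k)
              = (\<Sum>k<Suc n. f k (restrict (y(n := a)) ({..<Suc n} - {k})))"
  define I where "I \<equiv> \<lambda>y a. if win y a then 1 else (0::real)"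
  define W where "W \<equiv> \<lambda>y. \<Sum>a\<in>UNIV. I y a"
  define T where "T = (\<Sum>y\<in>?Y. W y)"
  have q1: "q \<ge> 1" unfolding q_def
    using finite_UNIV_card_ge_0[where 'a='a] by simp
  have cardY: "real (card ?Y) = q ^ n"
    by (simp add: card_PiE q_def)
  have T: "T = p * q ^ Suc n"
  proof -
    have "p * q ^ Suc n = (\<Sum>x\<in>PiE {..<Suc n} (\<lambda>_. (UNIV::'a set)).
           if (\<Prod>k<Suc n. x k) = (\<Sum>k<Suc n. f k (restrict x ({..<Suc n} - {k}))) then 1 else 0)"
      unfolding p_def q_def win_prob_card[symmetric]
      by (rule card_filter_sum) (simp add: finite_PiE)
    also have "\<dots> = (\<Sum>a\<in>UNIV. \<Sum>y\<in>?Y. I y a)"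
      unfolding sum_PiE_Suc I_def win_def ..
    also have "\<dots> = T" unfolding T_def W_def by (rule sum.swap)
    finally show ?thesis by simp
  qed
  have pairs: "(\<Sum>y\<in>?Y. I y a * I y b) \<le> q ^ n * \<omega>" if "a \<noteq> b" for a b
  proof -
    have "(\<Sum>y\<in>?Y. I y a * I y b) = real (card {y \<in> ?Y. win y a \<and> win y b})"
      by (subst card_filter_sum) (auto simp: finite_PiE I_def intro!: sum.cong)
    also have "\<dots> \<le> q ^ n * \<omega>"
      unfolding win_def q_def \<omega>_def by (rule pair_bound[OF that])
    finally show ?thesis .
  qed
  have sq: "(W y)\<^sup>2 = W y + (\<Sum>a\<in>UNIV. \<Sum>b\<in>UNIV - {a}. I y a * I y b)" for y
  proof -
    have "(W y)\<^sup>2 = (\<Sum>a\<in>UNIV. \<Sum>b\<in>UNIV. I y a * I y b)"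
      unfolding W_def power2_eq_square by (simp add: sum_product)
    also have "\<dots> = (\<Sum>a\<in>UNIV. I y a + (\<Sum>b\<in>UNIV - {a}. I y a * I y b))"
      by (intro sum.cong refl, subst sum.remove[of UNIV], auto simp: I_def)
    also have "\<dots> = W y + (\<Sum>a\<in>UNIV. \<Sum>b\<in>UNIV - {a}. I y a * I y b)"
      unfolding W_def by (simp add: sum.distrib)
    finally show ?thesis .
  qed
  have S2: "(\<Sum>y\<in>?Y. (W y)\<^sup>2) \<le> T + q * ((q - 1) * (q ^ n * \<omega>))"
  proof -
    have "(\<Sum>y\<in>?Y. (W y)\<^sup>2) = T + (\<Sum>y\<in>?Y. \<Sum>a\<in>UNIV. \<Sum>b\<in>UNIV - {a}. I y a * I y b)"
      unfolding sq T_def by (simp add: sum.distrib)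
    also have "(\<Sum>y\<in>?Y. \<Sum>a\<in>UNIV. \<Sum>b\<in>UNIV - {a}. I y a * I y b)
             = (\<Sum>a\<in>UNIV. \<Sum>b\<in>UNIV - {a}. \<Sum>y\<in>?Y. I y a * I y b)"
      by (subst sum.swap, rule sum.cong[OF refl], rule sum.swap)
    also have "\<dots> \<le> (\<Sum>a\<in>(UNIV::'a set). (q - 1) * (q ^ n * \<omega>))"
    proof (rule sum_mono)
      fix a :: 'a
      have "(\<Sum>b\<in>UNIV - {a}. \<Sum>y\<in>?Y. I y a * I y b) \<le> real (card (UNIV - {a})) * (q ^ n * \<omega>)"
        by (rule sum_bounded_above) (use pairs in auto)
      also have "real (card (UNIV - {a})) = q - 1"
        using q1 by (simp add: q_def card_Diff_singleton of_nat_diff)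
      finally show "(\<Sum>b\<in>UNIV - {a}. \<Sum>y\<in>?Y. I y a * I y b) \<le> (q - 1) * (q ^ n * \<omega>)" .
    qed
    also have "\<dots> = q * ((q - 1) * (q ^ n * \<omega>))" by (simp add: q_def)
    finally show ?thesis by simp
  qed
  have CS: "T\<^sup>2 \<le> (\<Sum>y\<in>?Y. (W y)\<^sup>2) * q ^ n"
    using sum_squared_le_sum_of_squares[of W ?Y] unfolding T_def cardY .
  define N where "N = q ^ n"
  have N: "N > 0" using q1 unfolding N_def by simp
  have "(p * q * N)\<^sup>2 \<le> (p * q * N + q * ((q - 1) * (N * \<omega>))) * N"
    using CS S2 T N unfolding N_def
    by (smt (verit, ccfv_SIG) mult.commute mult.left_commute mult_right_mono power_Suc zero_le_power)
  then have "N * N * (q * q * p * p) \<le> N * N * (q * p + q * (q - 1) * \<omega>)"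
    by (simp add: power2_eq_square algebra_simps)
  then have "q * q * p * p \<le> q * p + q * (q - 1) * \<omega>"
    using N by (simp add: mult_le_cancel_left_pos)
  then have "(2 * q * p - 1)\<^sup>2 \<le> 1 + 4 * q * (q - 1) * \<omega>"
    by (simp add: power2_eq_square algebra_simps)
  then have "2 * q * p - 1 \<le> sqrt (1 + 4 * q * (q - 1) * \<omega>)"
    using real_le_rsqrt by blast
  then have "p * (2 * q) \<le> 1 + sqrt (1 + 4 * q * (q - 1) * \<omega>)"
    by (simp add: algebra_simps)
  then show ?thesis
    using q1 unfolding p_def[symmetric] q_def[symmetric] \<omega>_def[symmetric]
    by (simp add: pos_le_divide_eq)
qed

theorem propositionB2:
  fixes m :: nat
  assumes "m \<ge> 2"
  shows "nof_omega TYPE('a::{finite,field}) m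
         \<le> (1 + sqrt (1 + 4 * real (card (UNIV::'a set)) * (real (card (UNIV::'a set)) - 1)
                          * nof_omega TYPE('a) (m - 1)))
            / (2 * real (card (UNIV::'a set)))"
proof -
  obtain n where m: "m = Suc n" using assms by (cases m) auto
  obtain f :: "nat \<Rightarrow> (nat \<Rightarrow> 'a) \<Rightarrow> 'a" where "nof_omega TYPE('a) m = nof_win_prob m f"
    using omega_attained by blast
  then show ?thesis using main_bound[of n f] unfolding m by simp
qed

end
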